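(* Let $G=(V,E)$ be a hypergraph, let $(V_1,\dots,V_k)$ be a maximal minimum $k$-partition in $G$ for an integer $k\ge2$, and let $S\subseteq V_1$ and $T\subseteq V\setminus V_1$ be such that $T\cap V_j\ne\emptyset$ for every $j\in\{2,\dots,k\}$. If $(U,\overline U)$ is a minimum $(S,T)$-terminal cut, then $U\subseteq V_1$.
   Context: A hypergraph $G=(V,E)$ has finite vertex set $V$ and finite multiset $E$ of unit-cost hyperedges (subsets of $V$). For $X\subseteq V$, $\overline X=V\setminus X$ and $d(X)$ is the number of hyperedges meeting both $X$ and $\overline X$. For an (ordered) partition of $V$ into $k$ non-empty parts, its cost is the number of hyperedges meeting at least two parts; a minimum $k$-partition has minimum cost; a minimum $k$-partition $(V_1,\dots,V_k)$ is a maximal minimum $k$-partition if there is no minimum $k$-partition $(V_1',\dots,V_k')$ with $V_1\subsetneq V_1'$. For disjoint $S,T\subseteq V$, a 2-partition $(U,\overline U)$ is an $(S,T)$-terminal cut if $S\subseteq U\subseteq V\setminus T$, and it is minimum if $d(U)$ is minimum among such cuts. *)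

theory Defs
  imports Main "HOL-Library.Multiset"
begin

text \<open>A hypergraph (V, E): V a finite vertex set, E a finite multiset of hyperedges,
  each a subset of V. All hyperedges have unit cost.\<close>
definition hypergraph :: "'a set \<Rightarrow> 'a set multiset \<Rightarrow> bool" where
  "hypergraph V E \<longleftrightarrow> finite V \<and> (\<forall>e\<in>#E. e \<subseteq> V)"

definition cut_val :: "'a set \<Rightarrow> 'a set multiset \<Rightarrow> 'a set \<Rightarrow> nat" where
  "cut_val V E X = size (filter_mset (\<lambda>e. e \<inter> X \<noteq> {} \<and> e \<inter> (V - X) \<noteq> {}) E)"

definition is_k_partition :: "'a set \<Rightarrow> nat \<Rightarrow> (nat \<Rightarrow> 'a set) \<Rightarrow> bool" where
  "is_k_partition V k P \<longleftrightarrow>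
     (\<forall>i\<in>{1..k}. P i \<noteq> {}) \<and>
     (\<forall>i\<in>{1..k}. \<forall>j\<in>{1..k}. i \<noteq> j \<longrightarrow> P i \<inter> P j = {}) \<and>
     (\<Union>i\<in>{1..k}. P i) = V"

definition part_cost :: "'a set multiset \<Rightarrow> nat \<Rightarrow> (nat \<Rightarrow> 'a set) \<Rightarrow> nat" where
  "part_cost E k P = size (filter_mset (\<lambda>e. card {i\<in>{1..k}. e \<inter> P i \<noteq> {}} \<ge> 2) E)"

definition min_k_partition :: "'a set \<Rightarrow> 'a set multiset \<Rightarrow> nat \<Rightarrow> (nat \<Rightarrow> 'a set) \<Rightarrow> bool" where
  "min_k_partition V E k P \<longleftrightarrow> is_k_partition V k P \<and>
     (\<forall>Q. is_k_partition V k Q \<longrightarrow> part_cost E k P \<le> part_cost E k Q)"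

definition maximal_min_k_partition :: "'a set \<Rightarrow> 'a set multiset \<Rightarrow> nat \<Rightarrow> (nat \<Rightarrow> 'a set) \<Rightarrow> bool" where
  "maximal_min_k_partition V E k P \<longleftrightarrow> min_k_partition V E k P \<and>
     \<not> (\<exists>Q. min_k_partition V E k Q \<and> P 1 \<subset> Q 1)"

definition terminal_cut :: "'a set \<Rightarrow> 'a set \<Rightarrow> 'a set \<Rightarrow> 'a set \<Rightarrow> bool" where
  "terminal_cut V S T U \<longleftrightarrow> S \<subseteq> U \<and> U \<subseteq> V - T"

definition min_terminal_cut :: "'a set \<Rightarrow> 'a set multiset \<Rightarrow> 'a set \<Rightarrow> 'a set \<Rightarrow> 'a set \<Rightarrow> bool" where
  "min_terminal_cut V E S T U \<longleftrightarrow> terminal_cut V S T U \<and>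
     (\<forall>U'. terminal_cut V S T U' \<longrightarrow> cut_val V E U \<le> cut_val V E U')"

end

theory Submission
  imports Defs
begin

lemma size_filter_sum: "size (filter_mset p M) = (\<Sum>e\<in>#M. (if p e then 1 else 0::nat))"
  by (induction M) auto

lemma sum2_mono:
  assumes "\<And>e. e \<in># M \<Longrightarrow> (f e::nat) \<le> g e + h e"
  shows "(\<Sum>e\<in>#M. f e) \<le> (\<Sum>e\<in>#M. g e) + (\<Sum>e\<in>#M. h e)"
proof -
  have "(\<Sum>e\<in>#M. f e) \<le> (\<Sum>e\<in>#M. g e + h e)" by (rule sum_mset_mono) (use assms in auto)
  also have "\<dots> = (\<Sum>e\<in>#M. g e) + (\<Sum>e\<in>#M. h e)" by (rule sum_mset.distrib)
  finally show ?thesis .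
qed

theorem lemma4p1:
  fixes V :: "'a set" and E :: "'a set multiset" and k :: nat and P :: "nat \<Rightarrow> 'a set"
    and S T U :: "'a set"
  assumes "hypergraph V E"
    and "k \<ge> 2"
    and "maximal_min_k_partition V E k P"
    and "S \<subseteq> P 1"
    and "T \<subseteq> V - P 1"
    and "\<forall>j\<in>{2..k}. T \<inter> P j \<noteq> {}"
    and "min_terminal_cut V E S T U"
  shows "U \<subseteq> P 1"
proof (rule ccontr)
  assume nsub: "\<not> U \<subseteq> P 1"
  have eV: "\<And>e. e \<in># E \<Longrightarrow> e \<subseteq> V" using assms(1) unfolding hypergraph_def by auto
  have kp: "is_k_partition V k P" and minP: "\<And>Q. is_k_partition V k Q \<Longrightarrow> part_cost E k P \<le> part_cost E k Q"
    and nomax: "\<not> (\<exists>Q. min_k_partition V E k Q \<and> P 1 \<subset> Q 1)"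
    using assms(3) unfolding maximal_min_k_partition_def min_k_partition_def by auto
  have ne: "\<And>i. i \<in> {1..k} \<Longrightarrow> P i \<noteq> {}"
    and dis: "\<And>i j. i \<in> {1..k} \<Longrightarrow> j \<in> {1..k} \<Longrightarrow> i \<noteq> j \<Longrightarrow> P i \<inter> P j = {}"
    and un: "(\<Union>i\<in>{1..k}. P i) = V" using kp unfolding is_k_partition_def by auto
  have tc: "S \<subseteq> U" "U \<subseteq> V - T" and minU: "\<And>U'. terminal_cut V S T U' \<Longrightarrow> cut_val V E U \<le> cut_val V E U'"
    using assms(7) unfolding min_terminal_cut_def terminal_cut_def by auto
  define V1 where "V1 = P 1"
  define W where "W = V1 \<union> U"
  define Q where "Q = (\<lambda>i. if i = 1 then W else P i - U)"
  define cr where "cr = (\<lambda>(X::'a set) (e::'a set). if e \<inter> X \<noteq> {} \<and> e \<inter> (V - X) \<noteq> {} then 1 else (0::nat))"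
  have cv: "\<And>X. cut_val V E X = (\<Sum>e\<in>#E. cr X e)"
    unfolding cut_val_def size_filter_sum cr_def by simp
  have V1V: "V1 \<subseteq> V" using un assms(2) V1_def by auto
  have UV: "U \<subseteq> V" using tc by auto
  have sub: "cr W e + cr (U \<inter> V1) e \<le> cr U e + cr V1 e" if "e \<in># E" for e
    using eV[OF that] V1V UV unfolding cr_def W_def by (auto split: if_splits)
  have "cut_val V E U \<le> cut_val V E (U \<inter> V1)"
    by (rule minU) (use tc assms(4) in \<open>auto simp: terminal_cut_def V1_def\<close>)
  moreover have "(\<Sum>e\<in>#E. cr W e + cr (U \<inter> V1) e) \<le> (\<Sum>e\<in>#E. cr U e + cr V1 e)"
    by (rule sum_mset_mono) (use sub in auto)
  ultimately have dW: "(\<Sum>e\<in>#E. cr W e) \<le> (\<Sum>e\<in>#E. cr V1 e)"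
    unfolding cv sum_mset.distrib by linarith
  define c where "c = (\<lambda>(R::nat \<Rightarrow> 'a set) (e::'a set). card {i\<in>{1..k}. e \<inter> R i \<noteq> {}})"
  define rest where "rest = (\<lambda>e. if 2 \<le> c P e \<and> e \<inter> V1 = {} then 1 else (0::nat))"
  have pc: "\<And>R. part_cost E k R = (\<Sum>e\<in>#E. if 2 \<le> c R e then 1 else 0)"
    unfolding part_cost_def size_filter_sum c_def by simp
  have fin: "\<And>R e. finite {i\<in>{1..k}. e \<inter> R i \<noteq> {}}" by auto
  have ptQ: "(if 2 \<le> c Q e then 1 else 0) \<le> cr W e + rest e" if "e \<in># E" for e
  proof (cases "2 \<le> c Q e")
    case True
    show ?thesis
    proof (cases "e \<inter> W = {}")
      case True
      have "{i\<in>{1..k}. e \<inter> Q i \<noteq> {}} = {i\<in>{1..k}. e \<inter> P i \<noteq> {}}"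
        using True unfolding Q_def W_def V1_def by auto
      moreover have "e \<inter> V1 = {}" using True W_def by auto
      ultimately show ?thesis using \<open>2 \<le> c Q e\<close> unfolding rest_def c_def by simp
    next
      case False
      have "\<not> {i\<in>{1..k}. e \<inter> Q i \<noteq> {}} \<subseteq> {1}"
      proof
        assume "{i\<in>{1..k}. e \<inter> Q i \<noteq> {}} \<subseteq> {1}"
        then have "card {i\<in>{1..k}. e \<inter> Q i \<noteq> {}} \<le> card {1::nat}" by (intro card_mono) auto
        then show False using \<open>2 \<le> c Q e\<close> unfolding c_def by simp
      qed
      then obtain i where i: "i \<in> {1..k}" "e \<inter> Q i \<noteq> {}" "i \<noteq> 1" by auto
      have "Q i \<subseteq> V - W"
      proof
        fix x assume "x \<in> Q i"
        then have "x \<in> P i" "x \<notin> U" using i unfolding Q_def by auto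
        moreover have "x \<notin> V1" using dis[of 1 i] i \<open>x \<in> P i\<close> assms(2) unfolding V1_def by auto
        ultimately show "x \<in> V - W" using un i unfolding W_def by auto
      qed
      then have "cr W e = 1" using i False unfolding cr_def by auto
      then show ?thesis by simp
    qed
  qed simp
  have ptP: "cr V1 e + rest e \<le> (if 2 \<le> c P e then 1 else 0)" if "e \<in># E" for e
  proof (cases "cr V1 e = 1")
    case True
    then have a: "e \<inter> V1 \<noteq> {}" "e \<inter> (V - V1) \<noteq> {}" unfolding cr_def by (auto split: if_splits)
    then obtain x where x: "x \<in> e" "x \<in> V" "x \<notin> V1" by auto
    then obtain j where j: "j \<in> {1..k}" "x \<in> P j" using un by auto
    then have "j \<noteq> 1" using x V1_def by auto
    have "{1, j} \<subseteq> {i\<in>{1..k}. e \<inter> P i \<noteq> {}}" using a j x assms(2) V1_def by auto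
    then have "card {1,j} \<le> c P e" unfolding c_def by (intro card_mono) auto
    then have "2 \<le> c P e" using \<open>j \<noteq> 1\<close> by simp
    then show ?thesis using a unfolding rest_def True by simp
  next
    case False
    then have "cr V1 e = 0" unfolding cr_def by (auto split: if_splits)
    then show ?thesis unfolding rest_def by simp
  qed
  have "part_cost E k Q \<le> (\<Sum>e\<in>#E. cr W e) + (\<Sum>e\<in>#E. rest e)"
    unfolding pc by (rule sum2_mono) (use ptQ in auto)
  also have "\<dots> \<le> (\<Sum>e\<in>#E. cr V1 e) + (\<Sum>e\<in>#E. rest e)" using dW by simp
  also have "\<dots> = (\<Sum>e\<in>#E. cr V1 e + rest e)" by (rule sum_mset.distrib[symmetric])
  also have "\<dots> \<le> part_cost E k P" unfolding pc by (rule sum_mset_mono) (use ptP in auto)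
  finally have costQ: "part_cost E k Q \<le> part_cost E k P" .
  have kQ: "is_k_partition V k Q"
    unfolding is_k_partition_def
  proof (intro conjI ballI impI)
    fix i assume i: "i \<in> {1..k}"
    show "Q i \<noteq> {}"
    proof (cases "i = 1")
      case True then show ?thesis using ne[of 1] assms(2) unfolding Q_def W_def V1_def by auto
    next
      case False
      then have "i \<in> {2..k}" using i by auto
      then have "T \<inter> P i \<noteq> {}" using assms(6) by blast
      then obtain t where "t \<in> T" "t \<in> P i" by blast
      then have "t \<notin> U" using tc by auto
      then show ?thesis using \<open>t \<in> P i\<close> False unfolding Q_def by auto
    qed
  next
    fix i j assume ij: "i \<in> {1..k}" "j \<in> {1..k}" "i \<noteq> j"
    show "Q i \<inter> Q j = {}"
      using dis[OF ij] dis[of 1 i] dis[of 1 j] ij unfolding Q_def W_def V1_def by auto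
  next
    show "(\<Union>i\<in>{1..k}. Q i) = V"
    proof
      show "(\<Union>i\<in>{1..k}. Q i) \<subseteq> V" using un UV V1V unfolding Q_def W_def by (auto split: if_splits)
      show "V \<subseteq> (\<Union>i\<in>{1..k}. Q i)"
      proof
        fix x assume "x \<in> V"
        then obtain j where j: "j \<in> {1..k}" "x \<in> P j" using un by auto
        show "x \<in> (\<Union>i\<in>{1..k}. Q i)"
        proof (cases "x \<in> U \<or> j = 1")
          case True
          then have "x \<in> Q 1" using j unfolding Q_def W_def V1_def by auto
          then show ?thesis using assms(2) by force
        next
          case False
          then have "x \<in> Q j" using j unfolding Q_def by auto
          then show ?thesis using j by blast
        qed
      qed
    qed
  qed
  have "min_k_partition V E k Q"
    unfolding min_k_partition_def using kQ costQ minP by (meson le_trans)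
  moreover have "P 1 \<subset> Q 1" using nsub unfolding Q_def W_def V1_def by auto
  ultimately show False using nomax by blast
qed

end
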